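(* For $\lambda\in[0,1]$ and $x,y\in\mathbb{R}^3$ define $$W_\lambda(x,y)=\lambda\left(\max\{|x|,|y|\}+\frac{(\min\{|x|,|y|\})^2}{|x-y|}\right)+(1-\lambda)\left(|x-y|+\frac23\,\frac{(\min\{|x|,|y|\})^2}{\max\{|x|,|y|\}}\right).$$ Then $$\sup_{\lambda\in[0,1]}\ \inf_{x,y\in\mathbb{R}^3,\ (x,y)\ne(0,0)}\frac{W_\lambda(x,y)}{|x|+|y|}>0.8218.$$
   Context: Conventions: a term $\frac{(\min\{|x|,|y|\})^2}{|x-y|}$ with $x=y\neq0$ is $+\infty$; terms with $\min\{|x|,|y|\}=0$ are $0$. *)

theory Defs
  imports "HOL-Analysis.Analysis" "HOL-Library.Extended_Real"
begin

definition near_term :: "real^3 \<Rightarrow> real^3 \<Rightarrow> ereal" where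
  "near_term x y =
     (let m = min (norm x) (norm y) in
      if m = 0 then 0 else if x = y then \<infinity> else ereal (m^2 / norm (x - y)))"

definition far_term :: "real^3 \<Rightarrow> real^3 \<Rightarrow> real" where
  "far_term x y =
     (let m = min (norm x) (norm y); M = max (norm x) (norm y) in
      if m = 0 then 0 else m^2 / M)"

definition W :: "real \<Rightarrow> real^3 \<Rightarrow> real^3 \<Rightarrow> ereal" where
  "W l x y =
     ereal l * (ereal (max (norm x) (norm y)) + near_term x y)
     + ereal (1 - l) * ereal (norm (x - y) + 2/3 * far_term x y)"

end

theory Submission
  imports Defs
begin

lemma key_real:
  fixes M m d :: real
  assumes "0 < m" "m \<le> M" "0 < d"
  shows "(4225/5009) * (M + m^2/d) + (1 - 4225/5009) * (d + 2/3 * (m^2/M))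
         \<ge> (821806/1000000) * (M + m)"
proof -
  have Mp: "M > 0" using assms by linarith
  have h1: "(4225/5009) * (m^2/d) + (1 - 4225/5009) * d \<ge> (3640/5009) * m"
  proof -
    have "(4225/5009) * m^2 + (784/5009) * d^2 - (3640/5009) * m * d = (65*m - 28*d)^2 / 5009"
      by (simp add: power2_eq_square algebra_simps)
    hence "(4225/5009) * m^2 + (784/5009) * d^2 \<ge> (3640/5009) * m * d" by (smt (verit) zero_le_power2 divide_nonneg_pos)
    hence "(3640/5009) * m \<le> ((4225/5009) * m^2 + (784/5009) * d^2) / d"
      using assms by (simp add: pos_le_divide_eq mult.commute mult.left_commute)
    moreover have "((4225/5009) * m^2 + (784/5009) * d^2) / d = (4225/5009) * (m^2/d) + (1 - 4225/5009) * d"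
      using assms by (simp add: field_simps power2_eq_square)
    ultimately show ?thesis by metis
  qed
  have h2: "(4225/5009) * M + (3640/5009) * m + (1 - 4225/5009) * (2/3 * (m^2/M)) \<ge> (821806/1000000) * (M + m)"
  proof -
    have q: "(4225/5009 - 821806/1000000) * M^2 + (3640/5009 - 821806/1000000) * M * m + (1 - 4225/5009) * 2/3 * m^2 \<ge> 0"
    proof -
      have "(4225/5009 - 821806/1000000) * M^2 + (3640/5009 - 821806/1000000) * M * m + (1 - 4225/5009) * 2/3 * m^2
          = (54286873/2504500000) * (M - (238213127/108573746) * m)^2 + (7152102645613/1631537681142000000) * m^2"
        by (simp add: power2_eq_square algebra_simps)
      moreover have "(54286873/2504500000) * (M - (238213127/108573746) * m)^2 \<ge> 0" by simp
      moreover have "(7152102645613/1631537681142000000) * m^2 \<ge> (0::real)" by simp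
      ultimately show ?thesis by linarith
    qed
    have "((4225/5009) * M + (3640/5009) * m + (1 - 4225/5009) * (2/3 * (m^2/M))) * M - (821806/1000000) * (M + m) * M
        = (4225/5009 - 821806/1000000) * M^2 + (3640/5009 - 821806/1000000) * M * m + (1 - 4225/5009) * 2/3 * m^2"
      using Mp by (simp add: field_simps power2_eq_square)
    hence "((4225/5009) * M + (3640/5009) * m + (1 - 4225/5009) * (2/3 * (m^2/M))) * M \<ge> ((821806/1000000) * (M + m)) * M"
      using q by linarith
    thus ?thesis using Mp by (simp add: mult_le_cancel_right_pos)
  qed
  show ?thesis using h1 h2 unfolding distrib_left by linarith
qed

lemma pointwise:
  fixes x y :: "real^3"
  assumes "(x, y) \<noteq> (0, 0)"
  shows "ereal (821806/1000000) \<le> W (4225/5009) x y / ereal (norm x + norm y)"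
proof -
  define m where "m = min (norm x) (norm y)"
  define M where "M = max (norm x) (norm y)"
  have pos: "norm x + norm y > 0" using assms
    by (metis add_nonneg_pos add_pos_nonneg norm_ge_zero norm_zero prod.inject zero_less_norm_iff)
  have sumMm: "norm x + norm y = M + m" unfolding M_def m_def by (simp add: max_def min_def)
  show ?thesis
  proof (cases "m = 0")
    case True
    have nt: "near_term x y = 0" using True unfolding near_term_def m_def by (simp add: Let_def)
    have ft: "far_term x y = 0" using True unfolding far_term_def m_def by (simp add: Let_def)
    have "norm (x - y) = M"
    proof (cases "norm x = 0")
      case True then show ?thesis unfolding M_def by simp
    next
      case False
      then have "norm y = 0" using \<open>m = 0\<close> unfolding m_def by (simp add: min_def split: if_splits)
      then show ?thesis unfolding M_def by simp
    qed
    then have "W (4225/5009) x y = ereal M"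
    proof -
      have "W (4225/5009) x y = ereal ((4225/5009) * (M + 0) + (1 - 4225/5009) * (M + 2/3 * 0))"
        unfolding W_def nt ft M_def[symmetric] \<open>norm (x - y) = M\<close> zero_ereal_def by simp
      then show ?thesis by simp
    qed
    moreover have "M = norm x + norm y" using sumMm True by simp
    ultimately have "W (4225/5009) x y / ereal (norm x + norm y) = ereal 1" using pos by simp
    then show ?thesis by simp
  next
    case False
    then have mpos: "m > 0" unfolding m_def by (simp add: min_def split: if_splits)
    show ?thesis
    proof (cases "x = y")
      case True
      have nt: "near_term x y = \<infinity>" using True mpos unfolding near_term_def m_def by (simp add: Let_def)
      have "W (4225/5009) x y = \<infinity>" unfolding W_def nt by simp
      then show ?thesis using pos by simp
    next
      case xy: False
      define d where "d = norm (x - y)"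
      have dpos: "d > 0" using xy unfolding d_def by simp
      have nt: "near_term x y = ereal (m^2/d)" using xy mpos unfolding near_term_def m_def d_def by (simp add: Let_def)
      have ft: "far_term x y = m^2/M" using mpos unfolding far_term_def m_def M_def by (simp add: Let_def)
      have "W (4225/5009) x y = ereal ((4225/5009) * (M + m^2/d) + (1 - 4225/5009) * (d + 2/3 * (m^2/M)))"
        unfolding W_def nt ft M_def[symmetric] d_def[symmetric] by simp
      moreover have "m \<le> M" unfolding m_def M_def by simp
      ultimately have "W (4225/5009) x y / ereal (norm x + norm y)
          = ereal (((4225/5009) * (M + m^2/d) + (1 - 4225/5009) * (d + 2/3 * (m^2/M))) / (M + m))"
        using pos sumMm by simp
      moreover have "(821806/1000000) \<le> ((4225/5009) * (M + m^2/d) + (1 - 4225/5009) * (d + 2/3 * (m^2/M))) / (M + m)"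
        using key_real[OF mpos \<open>m \<le> M\<close> dpos] pos sumMm by (simp add: pos_le_divide_eq)
      ultimately show ?thesis by simp
    qed
  qed
qed

theorem lemma10:
  shows "(SUP l \<in> {0..1::real}.
            INF p \<in> {p :: (real^3) \<times> (real^3). p \<noteq> (0, 0)}.
              W l (fst p) (snd p) / ereal (norm (fst p) + norm (snd p)))
         > ereal 0.8218"
proof -
  have "ereal (821806/1000000) \<le> (INF p \<in> {p :: (real^3) \<times> (real^3). p \<noteq> (0, 0)}.
              W (4225/5009) (fst p) (snd p) / ereal (norm (fst p) + norm (snd p)))"
    by (rule INF_greatest) (metis (mono_tags) mem_Collect_eq pointwise prod.collapse)
  also have "\<dots> \<le> (SUP l \<in> {0..1::real}.
            INF p \<in> {p :: (real^3) \<times> (real^3). p \<noteq> (0, 0)}.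
              W l (fst p) (snd p) / ereal (norm (fst p) + norm (snd p)))"
    by (rule SUP_upper) simp
  finally show ?thesis by (rule less_le_trans[rotated]) simp
qed

end
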